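(* Let $\mathcal{W}$ be a non-empty, compact and convex subset of $\mathbb{R}^m$, and consider the geometric mixture $\textsc{geo}$ with parameter space $\mathcal{W}$. Then for every probability matrix $\mathbf{P}$ over $\mathcal{P}_+$ and every $x\in\mathcal{X}$, the function $\mathbf{w}\mapsto\ell(x,\textsc{geo}(\mathbf{w},\mathbf{P}))$ is convex and differentiable on $\mathcal{W}$, and for all $\mathbf{w}\in\mathcal{W}$ $$\lvert\nabla_{\mathbf{w}}\ell(x,\textsc{geo}(\mathbf{w},\mathbf{P}))\rvert^2\le a\,\ell(x,\textsc{geo}(\mathbf{w},\mathbf{P}))$$ for every $a\ge\frac{m}{\log_2 e}\log_2^2\!\big(p_{\max}(\mathbf{P})/p_{\min}(\mathbf{P})\big)$. In particular $\textsc{geo}$ satisfies the properties of a nice mixture, with the constant in the gradient condition given by this bound.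
   Context: $\mathcal{X}=\{1,\dots,N\}$, $1<N<\infty$; $\mathcal{P}_+$ is the set of distributions on $\mathcal{X}$ with positive probability on each letter; $m>1$. A probability matrix over $\mathcal{P}_+$ is $\mathbf{P}=(\mathbf{p}(1)\cdots\mathbf{p}(N))$ with $\mathbf{p}(x)=(p_1(x),\dots,p_m(x))^{\mathsf T}$, $p_i\in\mathcal{P}_+$. $p_{\max}(\mathbf{P}):=\max_{x\in\mathcal{X}}\max_{1\le i\le m}p_i(x)$, $p_{\min}(\mathbf{P}):=\min_{x\in\mathcal{X}}\min_{1\le i\le m}p_i(x)$. $\ell(x,p):=-\log_2p(x)$. The geometric mixture is $\textsc{geo}(x;\mathbf{w},\mathbf{P}):=\prod_{i=1}^mp_i(x)^{w_i}\big/\sum_{y\in\mathcal{X}}\prod_{i=1}^mp_i(y)^{w_i}$ for $\mathbf{w}\in\mathbb{R}^m$. A mixture with parameter space $\mathcal{W}$ is nice if $\mathcal{W}$ is non-empty, compact, convex, $\mathbf{w}\mapsto\ell(x,\textsc{mix}(\mathbf{w},\mathbf{P}))$ is convex and differentiable on $\mathcal{W}$ for all $\mathbf{P},x$, and there is $a>0$ with $\lvert\nabla_{\mathbf{w}}\ell(x,\textsc{mix}(\mathbf{w},\mathbf{P}))\rvert^2\le a\,\ell(x,\textsc{mix}(\mathbf{w},\mathbf{P}))$ for all $\mathbf{w},\mathbf{P},x$. *)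

theory Defs
  imports "HOL-Analysis.Analysis"
begin

text \<open>Alphabet X = {1..N}. Experts are indexed by a finite type 'm (so m = CARD('m)),
  a weight vector is w :: real^'m, and a probability matrix is P :: 'm => nat => real,
  P i = p_i, a distribution on {1..N}.\<close>

definition prob_matrix_pos :: "nat \<Rightarrow> ('m::finite \<Rightarrow> nat \<Rightarrow> real) \<Rightarrow> bool" where
  "prob_matrix_pos N P \<longleftrightarrow>
     (\<forall>i. (\<forall>x\<in>{1..N}. 0 < P i x) \<and> (\<Sum>x=1..N. P i x) = 1)"

definition p_max :: "nat \<Rightarrow> ('m::finite \<Rightarrow> nat \<Rightarrow> real) \<Rightarrow> real" where
  "p_max N P = Max {P i x | i x. x \<in> {1..N}}"

definition p_min :: "nat \<Rightarrow> ('m::finite \<Rightarrow> nat \<Rightarrow> real) \<Rightarrow> real" where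
  "p_min N P = Min {P i x | i x. x \<in> {1..N}}"

definition code_len :: "nat \<Rightarrow> (nat \<Rightarrow> real) \<Rightarrow> real" where
  "code_len x p = - log 2 (p x)"

definition geo :: "nat \<Rightarrow> ('m::finite \<Rightarrow> nat \<Rightarrow> real) \<Rightarrow> real^'m \<Rightarrow> nat \<Rightarrow> real" where
  "geo N P w x = (\<Prod>i\<in>UNIV. P i x powr (w $ i)) / (\<Sum>y=1..N. \<Prod>i\<in>UNIV. P i y powr (w $ i))"

end

theory Submission
  imports Defs
begin

lemma dlin: "((\<lambda>w::real^'m::finite. \<Sum>i\<in>UNIV. w$i * c i) has_derivative (\<lambda>h. \<Sum>i\<in>UNIV. h$i * c i)) F"
  by (auto intro!: derivative_eq_intros bounded_linear_imp_has_derivative[OF bounded_linear_vec_nth])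

lemma dlse:
  assumes "finite A" "A \<noteq> {}"
  shows "((\<lambda>w::real^'m::finite. ln (\<Sum>y\<in>A. exp (\<Sum>i\<in>UNIV. w$i * c i y)))
    has_derivative (\<lambda>h. (\<Sum>y\<in>A. exp (\<Sum>i\<in>UNIV. w$i * c i y) * (\<Sum>i\<in>UNIV. h$i * c i y)) / (\<Sum>y\<in>A. exp (\<Sum>i\<in>UNIV. w$i * c i y)))) (at w)"
proof -
  have pos: "(\<Sum>y\<in>A. exp (\<Sum>i\<in>UNIV. w$i * c i y)) > 0"
    using assms by (intro sum_pos) auto
  have "((\<lambda>w::real^'m::finite. (\<Sum>y\<in>A. exp (\<Sum>i\<in>UNIV. w$i * c i y))) has_derivative
     (\<lambda>h. (\<Sum>y\<in>A. exp (\<Sum>i\<in>UNIV. w$i * c i y) * (\<Sum>i\<in>UNIV. h$i * c i y)))) (at w)"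
    apply (rule has_derivative_sum)
    apply (rule has_derivative_exp[OF dlin, THEN has_derivative_eq_rhs])
    by (auto simp: mult.commute)
  from has_derivative_ln[OF pos this] show ?thesis
    by (simp add: field_simps)
qed

lemma lse_convex:
  fixes a b :: "nat \<Rightarrow> real"
  assumes "finite A" "A \<noteq> {}" "0 \<le> t" "t \<le> 1"
  shows "ln (\<Sum>y\<in>A. exp ((1-t)*a y + t*b y)) \<le> (1-t)*ln(\<Sum>y\<in>A. exp (a y)) + t*ln(\<Sum>y\<in>A. exp (b y))"
proof -
  define Sa where "Sa = (\<Sum>y\<in>A. exp (a y))"
  define Sb where "Sb = (\<Sum>y\<in>A. exp (b y))"
  have Sa: "Sa > 0" unfolding Sa_def using assms by (intro sum_pos) auto
  have Sb: "Sb > 0" unfolding Sb_def using assms by (intro sum_pos) auto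
  define K where "K = (1-t)*ln Sa + t*ln Sb"
  have "(\<Sum>y\<in>A. exp ((1-t)*a y + t*b y)) = (\<Sum>y\<in>A. exp K * exp ((1-t)*(a y - ln Sa) + t*(b y - ln Sb)))"
    by (intro sum.cong refl) (simp add: K_def exp_add[symmetric] algebra_simps)
  also have "\<dots> = exp K * (\<Sum>y\<in>A. exp ((1-t)*(a y - ln Sa) + t*(b y - ln Sb)))"
    by (simp add: sum_distrib_left)
  also have "\<dots> \<le> exp K * (\<Sum>y\<in>A. (1-t)*exp (a y - ln Sa) + t*exp(b y - ln Sb))"
  proof (intro mult_left_mono sum_mono)
    fix y
    show "exp ((1-t)*(a y - ln Sa) + t*(b y - ln Sb)) \<le> (1-t)*exp (a y - ln Sa) + t*exp(b y - ln Sb)"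
      using convex_onD[OF exp_convex, of t "a y - ln Sa" "b y - ln Sb"] assms by simp
  qed simp
  also have "(\<Sum>y\<in>A. (1-t)*exp (a y - ln Sa) + t*exp(b y - ln Sb)) = (1-t)*(\<Sum>y\<in>A. exp (a y))/Sa + t*(\<Sum>y\<in>A. exp (b y))/Sb"
    using Sa Sb by (simp add: sum.distrib sum_distrib_left sum_divide_distrib exp_diff)
  also have "\<dots> = 1" using Sa Sb by (simp add: Sa_def[symmetric] Sb_def[symmetric])
  finally have le: "(\<Sum>y\<in>A. exp ((1-t)*a y + t*b y)) \<le> exp K" by simp
  have pos: "(\<Sum>y\<in>A. exp ((1-t)*a y + t*b y)) > 0" using assms by (intro sum_pos) auto
  from ln_le_cancel_iff[OF pos, of "exp K"] le have "ln (\<Sum>y\<in>A. exp ((1-t)*a y + t*b y)) \<le> K" by simp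
  thus ?thesis by (simp add: K_def Sa_def Sb_def)
qed

theorem lemma1:
  fixes N :: nat and W :: "(real^'m::finite) set"
    and P :: "'m \<Rightarrow> nat \<Rightarrow> real" and x :: nat
  assumes "1 < N" and "CARD('m) > 1"
    and "W \<noteq> {}" and "compact W" and "convex W"
    and "prob_matrix_pos N P" and "x \<in> {1..N}"
  shows "convex_on W (\<lambda>w. code_len x (geo N P w))
       \<and> (\<forall>w\<in>W. (\<lambda>w. code_len x (geo N P w)) differentiable (at w))
       \<and> (\<forall>a. a \<ge> real CARD('m) / log 2 (exp 1) * (log 2 (p_max N P / p_min N P))\<^sup>2 \<longrightarrow>
            (\<forall>w\<in>W. \<forall>g. GDERIV (\<lambda>w. code_len x (geo N P w)) w :> g \<longrightarrow>
                 (norm g)\<^sup>2 \<le> a * code_len x (geo N P w)))"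
proof -
  have Ppos: "\<And>i y. y \<in> {1..N} \<Longrightarrow> 0 < P i y" using assms(6) unfolding prob_matrix_pos_def by blast
  have A: "finite {1..N}" "{1..N} \<noteq> {}" using assms(1) by auto
  define c where "c i y = ln (P i y)" for i y
  define E where "E w y = exp (\<Sum>i\<in>UNIV. w$i * c i y)" for w :: "real^'m" and y
  define S where "S w = (\<Sum>y=1..N. E w y)" for w
  define lin where "lin w y = (\<Sum>i\<in>UNIV. w$i * c i y)" for w :: "real^'m" and y
  have Spos: "S w > 0" for w unfolding S_def E_def using A by (intro sum_pos) auto
  have prodE: "(\<Prod>i\<in>UNIV. P i y powr (w $ i)) = E w y" if "y \<in> {1..N}" for w y
  proof -
    have "P i y \<noteq> 0" for i using Ppos[OF that, of i] by simp
    then show ?thesis by (simp add: powr_def E_def c_def exp_sum mult.commute)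
  qed
  have geo_eq: "geo N P w x = E w x / S w" for w
    unfolding geo_def S_def using prodE assms(7) by simp
  have cl: "code_len x (geo N P w) = (ln (S w) - lin w x) / ln 2" for w
  proof -
    have "ln (E w x / S w) = lin w x - ln (S w)"
      using Spos[of w] by (simp add: ln_div E_def lin_def)
    thus ?thesis unfolding code_len_def geo_eq log_def by (simp add: field_simps)
  qed
  have feq: "(\<lambda>w. code_len x (geo N P w)) = (\<lambda>w. (ln (S w) - lin w x) / ln 2)"
    using cl by auto
  have linc: "lin ((1 - t) *\<^sub>R u + t *\<^sub>R v) y = (1-t) * lin u y + t * lin v y" for t u v y
    by (simp add: lin_def sum_distrib_left flip: sum.distrib) (simp add: algebra_simps sum_subtractf sum.distrib)
  have conv: "convex_on W (\<lambda>w. code_len x (geo N P w))"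
    unfolding feq
  proof (rule convex_onI[OF _ assms(5)])
    fix t :: real and u v :: "real^'m"
    assume t: "0 < t" "t < 1"
    have "ln (S ((1 - t) *\<^sub>R u + t *\<^sub>R v)) = ln (\<Sum>y=1..N. exp ((1-t)*lin u y + t*lin v y))"
      unfolding S_def E_def using linc[unfolded lin_def] by (simp add: lin_def)
    also have "\<dots> \<le> (1-t)*ln(\<Sum>y=1..N. exp (lin u y)) + t*ln(\<Sum>y=1..N. exp (lin v y))"
      using lse_convex[OF A, of t] t by simp
    also have "\<dots> = (1-t)*ln (S u) + t * ln (S v)" by (simp add: S_def E_def lin_def)
    finally have "ln (S ((1 - t) *\<^sub>R u + t *\<^sub>R v)) - lin ((1 - t) *\<^sub>R u + t *\<^sub>R v) x
        \<le> (1-t)*(ln (S u) - lin u x) + t * (ln (S v) - lin v x)"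
      using linc[of t u v x] by (simp only: ) (simp add: algebra_simps)
    from divide_right_mono[OF this, of "ln 2"] show "(ln (S ((1 - t) *\<^sub>R u + t *\<^sub>R v)) - lin ((1 - t) *\<^sub>R u + t *\<^sub>R v) x) / ln 2
      \<le> (1 - t) * ((ln (S u) - lin u x) / ln 2) + t * ((ln (S v) - lin v x) / ln 2)"
      by (simp add: add_divide_distrib)
  qed
  define D where "D w h = ((\<Sum>y=1..N. E w y * lin h y) / S w - lin h x) / ln 2" for w h
  have der: "((\<lambda>w. code_len x (geo N P w)) has_derivative D w) (at w)" for w
  proof -
    have "((\<lambda>w. ln (S w) - lin w x) has_derivative (\<lambda>h. (\<Sum>y=1..N. E w y * lin h y) / S w - lin h x)) (at w)"
      unfolding S_def E_def lin_def
      by (intro has_derivative_diff dlse[OF A] dlin)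
    from has_derivative_divide'[OF this has_derivative_const, of "ln 2"]
    show ?thesis unfolding feq D_def by simp
  qed
  have diff: "\<forall>w\<in>W. (\<lambda>w. code_len x (geo N P w)) differentiable (at w)"
    using der unfolding differentiable_def by blast
  define Q where "Q = {P i y | i y. y \<in> {1..N}}"
  have Qeq: "Q = (\<lambda>(i,y). P i y) ` (UNIV \<times> {1..N})" unfolding Q_def image_def by (auto; force)
  have Qfin: "finite Q" unfolding Qeq by simp
  have Qne: "Q \<noteq> {}" unfolding Qeq using A by auto
  have inQ: "P i y \<in> Q" if "y \<in> {1..N}" for i y unfolding Q_def using that by blast
  have pmin_le: "p_min N P \<le> P i y" and pmax_ge: "P i y \<le> p_max N P" if "y \<in> {1..N}" for i y
    using inQ[OF that] Qfin unfolding p_min_def p_max_def Q_def[symmetric] by auto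
  have pmin_pos: "p_min N P > 0"
  proof -
    have "Min Q \<in> Q" using Qfin Qne by (rule Min_in)
    then show ?thesis unfolding p_min_def Q_def[symmetric] using Q_def Ppos by auto
  qed
  define L where "L = ln (p_max N P) - ln (p_min N P)"
  have cdiff: "\<bar>c i y - c i x\<bar> \<le> L" if "y \<in> {1..N}" for i y
  proof -
    have a1: "ln (p_min N P) \<le> c i y" "c i y \<le> ln (p_max N P)"
      "ln (p_min N P) \<le> c i x" "c i x \<le> ln (p_max N P)"
      using pmin_le[OF that] pmax_ge[OF that] pmin_le[OF assms(7)] pmax_ge[OF assms(7)]
        pmin_pos Ppos[OF that] Ppos[OF assms(7)] unfolding c_def by (auto intro: ln_mono)
    thus ?thesis unfolding L_def by linarith
  qed
  have L0: "L \<ge> 0" using cdiff[OF assms(7), of undefined] by simp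
  have grad: "(norm g)\<^sup>2 \<le> real CARD('m) * L\<^sup>2 / ln 2 * code_len x (geo N P w)"
    if g: "GDERIV (\<lambda>w. code_len x (geo N P w)) w :> g" for w g
  proof -
    have eqD: "(\<lambda>h. h \<bullet> g) = D w" using has_derivative_unique[OF g[unfolded gderiv_def] der] .
    have gi: "g $ i = D w (axis i 1)" for i
      using fun_cong[OF eqD, of "axis i 1"] by (simp add: inner_axis')
    define q where "q = E w x / S w"
    have Ex: "E w x \<le> S w" unfolding S_def using A assms(7) by (intro member_le_sum) (auto simp: E_def)
    have q0: "q > 0" "q \<le> 1" unfolding q_def using Ex Spos[of w] by (auto simp: E_def)
    have linax: "lin (axis i 1) y = c i y" for i y
    proof -
      have "lin (axis i 1) y = (\<Sum>j\<in>UNIV. if j = i then c j y else 0)"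
        unfolding lin_def axis_def by (intro sum.cong) auto
      then show ?thesis by simp
    qed
    have sumq: "(\<Sum>y=1..N. E w y / S w) = 1"
      using Spos[of w] by (simp add: S_def sum_divide_distrib[symmetric])
    have gbound: "\<bar>g $ i\<bar> \<le> (1 - q) * L / ln 2" for i
    proof -
      have "(\<Sum>y=1..N. E w y * c i y) / S w - c i x = (\<Sum>y=1..N. E w y / S w * (c i y - c i x))"
      proof -
        have "(\<Sum>y=1..N. E w y / S w * (c i y - c i x)) = (\<Sum>y=1..N. E w y / S w * c i y) - (\<Sum>y=1..N. E w y / S w) * c i x"
          by (simp add: right_diff_distrib sum_subtractf sum_distrib_right)
        also have "\<dots> = (\<Sum>y=1..N. E w y * c i y) / S w - c i x"
          using sumq by (simp add: sum_divide_distrib)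
        finally show ?thesis by simp
      qed
      also have "\<bar>\<dots>\<bar> \<le> (\<Sum>y=1..N. E w y / S w * \<bar>c i y - c i x\<bar>)"
        by (rule order_trans[OF sum_abs]) (simp add: abs_mult E_def Spos less_imp_le)
      also have "\<dots> \<le> (\<Sum>y=1..N. E w y / S w * (L - (if y = x then L else 0)))"
        using cdiff Spos[of w] by (intro sum_mono mult_left_mono) (auto simp: E_def less_imp_le)
      also have "\<dots> = (1 - q) * L"
      proof -
        have "(\<Sum>y=1..N. E w y / S w * (L - (if y = x then L else 0)))
            = (\<Sum>y=1..N. E w y / S w) * L - (\<Sum>y=1..N. if y = x then E w y / S w * L else 0)"
          by (simp add: right_diff_distrib sum_subtractf sum_distrib_right if_distrib[of "\<lambda>z. _ * z"] cong: if_cong)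
        also have "\<dots> = L - q * L" using sumq assms(7) A by (simp add: sum.delta q_def)
        finally show ?thesis by (simp add: algebra_simps)
      qed
      finally have "\<bar>(\<Sum>y=1..N. E w y * c i y) / S w - c i x\<bar> \<le> (1 - q) * L" .
      then show ?thesis unfolding gi D_def linax by (simp add: divide_right_mono)
    qed
    have "(norm g)\<^sup>2 = (\<Sum>i\<in>UNIV. (g $ i)\<^sup>2)"
      unfolding power2_norm_eq_inner inner_vec_def by (simp add: power2_eq_square)
    also have "\<dots> \<le> (\<Sum>i\<in>(UNIV::'m set). ((1 - q) * L / ln 2)\<^sup>2)"
    proof (rule sum_mono)
      fix i
      have nn: "0 \<le> (1 - q) * L / ln 2" using q0 L0 by simp
      have "\<bar>g $ i\<bar> \<le> \<bar>(1 - q) * L / ln 2\<bar>" unfolding abs_of_nonneg[OF nn] by (rule gbound)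
      then show "(g $ i)\<^sup>2 \<le> ((1 - q) * L / ln 2)\<^sup>2" by (simp only: abs_le_square_iff)
    qed
    also have "\<dots> = real CARD('m) * ((1 - q) * L / ln 2)\<^sup>2" by simp
    also have "\<dots> \<le> real CARD('m) * L\<^sup>2 / ln 2 * ((1 - q) / ln 2)"
    proof -
      have "(1 - q)^2 \<le> (1 - q)" using q0 mult_left_le[of "1 - q" "1 - q"] by (simp add: power2_eq_square)
      then have "(1 - q)^2 * (L\<^sup>2 / (ln 2)^2) \<le> (1 - q) * (L\<^sup>2 / (ln 2)^2)"
        by (intro mult_right_mono) auto
      moreover have "((1 - q) * L / ln 2)\<^sup>2 = (1 - q)^2 * (L\<^sup>2 / (ln 2)^2)"
        by (simp add: power_mult_distrib power_divide)
      moreover have "L\<^sup>2 / ln 2 * ((1 - q) / ln 2) = (1 - q) * (L\<^sup>2 / (ln 2)^2)"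
        by (simp add: power2_eq_square)
      ultimately have "((1 - q) * L / ln 2)\<^sup>2 \<le> L\<^sup>2 / ln 2 * ((1 - q) / ln 2)" by simp
      from mult_left_mono[OF this, of "real CARD('m)"] show ?thesis by (simp add: mult.assoc)
    qed
    also have "\<dots> \<le> real CARD('m) * L\<^sup>2 / ln 2 * code_len x (geo N P w)"
    proof (rule mult_left_mono)
      have "ln q \<le> q - 1" using q0 by (intro ln_le_minus_one) auto
      moreover have "code_len x (geo N P w) = - ln q / ln 2"
        unfolding code_len_def geo_eq q_def log_def by simp
      moreover have "(1 - q) / ln 2 \<le> (- ln q) / ln 2" using calculation(1) by (intro divide_right_mono) auto
      ultimately show "(1 - q) / ln 2 \<le> code_len x (geo N P w)" by simp
    qed simp
    finally show ?thesis .
  qed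
  have bnd: "real CARD('m) / log 2 (exp 1) * (log 2 (p_max N P / p_min N P))\<^sup>2 = real CARD('m) * L\<^sup>2 / ln 2"
  proof -
    have "p_max N P > 0" using pmin_pos pmin_le[OF assms(7), of undefined] pmax_ge[OF assms(7), of undefined] by linarith
    then have "log 2 (p_max N P / p_min N P) = L / ln 2"
      unfolding L_def log_def using pmin_pos by (simp add: ln_div)
    then show ?thesis by (simp add: log_def power2_eq_square)
  qed
  have clnn: "code_len x (geo N P w) \<ge> 0" for w
  proof -
    have "E w x \<le> S w" unfolding S_def using A assms(7) by (intro member_le_sum) (auto simp: E_def)
    then have "ln (E w x / S w) \<le> 0" using Spos[of w] by (simp add: E_def)
    then show ?thesis unfolding code_len_def geo_eq log_def by (simp add: divide_nonpos_pos)
  qed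
  have "\<forall>a. a \<ge> real CARD('m) / log 2 (exp 1) * (log 2 (p_max N P / p_min N P))\<^sup>2 \<longrightarrow>
            (\<forall>w\<in>W. \<forall>g. GDERIV (\<lambda>w. code_len x (geo N P w)) w :> g \<longrightarrow>
                 (norm g)\<^sup>2 \<le> a * code_len x (geo N P w))"
  proof (intro allI impI ballI)
    fix a w g
    assume a: "a \<ge> real CARD('m) / log 2 (exp 1) * (log 2 (p_max N P / p_min N P))\<^sup>2"
      and g: "GDERIV (\<lambda>w. code_len x (geo N P w)) w :> g"
    have "(norm g)\<^sup>2 \<le> real CARD('m) * L\<^sup>2 / ln 2 * code_len x (geo N P w)" by (rule grad[OF g])
    also have "\<dots> \<le> a * code_len x (geo N P w)"
      using a bnd clnn[of w] by (intro mult_right_mono) auto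
    finally show "(norm g)\<^sup>2 \<le> a * code_len x (geo N P w)" .
  qed
  with conv diff show ?thesis by blast
qed

end
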